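(* Let $\kappa\in\mathcal{L}$, let $\lambda_1>0$, $\lambda_2>0$ with $(\lambda_1,\lambda_2)\in\mathcal{R}_2$, and let $u\ge0$. Let $X_1,\dots,X_n$ be i.i.d. samples from $\kappa$ with empirical distribution $\hat\kappa(n)$, and \[ L(\boldsymbol\lambda,m(\kappa),\hat\kappa(n))=\frac1n\sum_{i=1}^n\log\Big(1-(X_i-m(\kappa))\lambda_1-(B-f(|X_i|))\lambda_2\Big). \] Then $\mathbb{P}\big(L(\boldsymbol\lambda,m(\kappa),\hat\kappa(n))\ge u\big)\le e^{-nu}$.
   Context: $\mathcal{P}(\mathbb{R})$: probability distributions on $\mathbb{R}$ with finite mean; $m(\kappa)$: mean. Fix a strictly increasing, continuous, non-negative, convex $f:[0,\infty)\to[0,\infty)$ with $f(y)/y\to\infty$, and $B>0$; $\mathcal{L}=\{\eta\in\mathcal{P}(\mathbb{R}):\mathbb{E}_\eta f(|X|)\le B\}$. $\mathcal{R}_2=\{(\lambda_1,\lambda_2):\lambda_1\ge0,\lambda_2\ge0,\ 1-(y-m(\kappa))\lambda_1-(B-f(|y|))\lambda_2\ge0\ \forall y\in\mathbb{R}\}$ (with $\log 0=-\infty$). *)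

theory Defs
  imports "HOL-Probability.Probability"
begin

definition PR :: "real measure set" where
  "PR = {\<eta>. prob_space \<eta> \<and> sets \<eta> = sets borel \<and> integrable \<eta> (\<lambda>x. x)}"

definition mean :: "real measure \<Rightarrow> real" where
  "mean \<kappa> = (\<integral>x. x \<partial>\<kappa>)"

definition calL :: "(real \<Rightarrow> real) \<Rightarrow> real \<Rightarrow> real measure set" where
  "calL f B = {\<eta> \<in> PR. (\<integral>\<^sup>+x. ennreal (f \<bar>x\<bar>) \<partial>\<eta>) \<le> ennreal B}"

definition calR2 :: "(real \<Rightarrow> real) \<Rightarrow> real \<Rightarrow> real measure \<Rightarrow> (real \<times> real) set" where
  "calR2 f B \<kappa> = {(l1, l2). l1 \<ge> 0 \<and> l2 \<ge> 0 \<and>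
      (\<forall>y::real. 1 - (y - mean \<kappa>) * l1 - (B - f \<bar>y\<bar>) * l2 \<ge> 0)}"

definition elog :: "real \<Rightarrow> ereal" where
  "elog x = (if x > 0 then ereal (ln x) else -\<infinity>)"

definition Lemp :: "(real \<Rightarrow> real) \<Rightarrow> real \<Rightarrow> real \<times> real \<Rightarrow> real \<Rightarrow> nat \<Rightarrow> (nat \<Rightarrow> real) \<Rightarrow> ereal" where
  "Lemp f B lam m n xs =
     ereal (1 / real n) * (\<Sum>i<n. elog (1 - (xs i - m) * fst lam - (B - f \<bar>xs i\<bar>) * snd lam))"

end

theory Submission
  imports Defs
begin

lemma sum_elog:
  fixes z :: "nat \<Rightarrow> real" and n :: nat
  shows "(\<Sum>i<n. elog (z i)) = (if \<forall>i<n. z i > 0 then ereal (\<Sum>i<n. ln (z i)) else -\<infinity>)"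
proof (induction n)
  case 0
  then show ?case by simp
next
  case (Suc n)
  have e: "(\<Sum>i<Suc n. elog (z i)) = (\<Sum>i<n. elog (z i)) + elog (z n)" by simp
  show ?case
  proof (cases "\<forall>i<n. z i > 0")
    case True
    then show ?thesis unfolding e Suc.IH by (auto simp: elog_def less_Suc_eq)
  next
    case False
    then show ?thesis unfolding e Suc.IH by (auto simp: elog_def less_Suc_eq)
  qed
qed

theorem lemma27:
  fixes f :: "real \<Rightarrow> real" and B :: real and \<kappa> :: "real measure"
    and l1 l2 u :: real and n :: nat
    and M :: "'a measure" and X :: "nat \<Rightarrow> 'a \<Rightarrow> real"
  assumes f_mono: "strict_mono_on {0..} f"
    and f_cont: "continuous_on {0..} f"
    and f_nonneg: "\<forall>y\<ge>0. f y \<ge> 0"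
    and f_convex: "convex_on {0..} f"
    and f_superlin: "filterlim (\<lambda>y. f y / y) at_top at_top"
    and B_pos: "B > 0"
    and kappa: "\<kappa> \<in> calL f B"
    and l1_pos: "l1 > 0" and l2_pos: "l2 > 0"
    and lam_R2: "(l1, l2) \<in> calR2 f B \<kappa>"
    and u_nonneg: "u \<ge> 0"
    and M: "prob_space M"
    and X_meas: "\<And>i. i < n \<Longrightarrow> X i \<in> borel_measurable M"
    and X_indep: "prob_space.indep_vars M (\<lambda>_. borel) X {..<n}"
    and X_distr: "\<And>i. i < n \<Longrightarrow> distr M borel (X i) = \<kappa>"
  shows "measure M {\<omega> \<in> space M. Lemp f B (l1, l2) (mean \<kappa>) n (\<lambda>i. X i \<omega>) \<ge> ereal u}
           \<le> exp (- real n * u)"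
proof -
  interpret prob_space M by (rule M)
  define g where "g x = 1 - (x - mean \<kappa>) * l1 - (B - f \<bar>x\<bar>) * l2" for x
  have g_nonneg: "g x \<ge> 0" for x using lam_R2 by (auto simp: calR2_def g_def)
  have fa_cont: "continuous_on UNIV (\<lambda>x. f \<bar>x\<bar>)"
    by (rule continuous_on_compose2[OF f_cont]) (auto intro!: continuous_intros)
  have g_cont: "continuous_on UNIV g"
    unfolding g_def by (intro continuous_intros fa_cont)
  have g_meas: "g \<in> borel_measurable borel"
    by (rule borel_measurable_continuous_onI[OF g_cont])
  have fa_meas: "(\<lambda>x. f \<bar>x\<bar>) \<in> borel_measurable borel"
    by (rule borel_measurable_continuous_onI[OF fa_cont])
  have kPR: "\<kappa> \<in> PR" and kB: "(\<integral>\<^sup>+x. ennreal (f \<bar>x\<bar>) \<partial>\<kappa>) \<le> ennreal B"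
    using kappa by (auto simp: calL_def)
  then have kprob: "prob_space \<kappa>" and ksets: "sets \<kappa> = sets borel"
    and kint: "integrable \<kappa> (\<lambda>x. x)" by (auto simp: PR_def)
  have fa_meas_k: "(\<lambda>x. f \<bar>x\<bar>) \<in> borel_measurable \<kappa>"
    by (subst measurable_cong_sets[OF ksets refl]) (rule fa_meas)
  have fa_int: "integrable \<kappa> (\<lambda>x. f \<bar>x\<bar>)"
  proof (rule integrableI_nonneg[OF fa_meas_k])
    show "AE x in \<kappa>. 0 \<le> f \<bar>x\<bar>" using f_nonneg by simp
    show "(\<integral>\<^sup>+x. ennreal (f \<bar>x\<bar>) \<partial>\<kappa>) < \<infinity>"
      using le_less_trans[OF kB ennreal_less_top] by simp
  qed
  have fa_le: "(\<integral>x. f \<bar>x\<bar> \<partial>\<kappa>) \<le> B"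
  proof -
    have "ennreal (\<integral>x. f \<bar>x\<bar> \<partial>\<kappa>) = (\<integral>\<^sup>+x. ennreal (f \<bar>x\<bar>) \<partial>\<kappa>)"
      using f_nonneg by (intro nn_integral_eq_integral[symmetric] fa_int) auto
    with kB have "ennreal (\<integral>x. f \<bar>x\<bar> \<partial>\<kappa>) \<le> ennreal B" by simp
    then show ?thesis using B_pos by (simp add: ennreal_le_iff)
  qed
  have g_int: "integrable \<kappa> g"
    unfolding g_def using kint fa_int finite_measure.integrable_const[OF prob_space.finite_measure[OF kprob]]
    by (intro Bochner_Integration.integrable_diff Bochner_Integration.integrable_mult_left) auto
  have g_integral: "(\<integral>x. g x \<partial>\<kappa>) \<le> 1"
  proof -
    define c0 where "c0 = 1 + mean \<kappa> * l1 - B * l2"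
    have kc: "integrable \<kappa> (\<lambda>x. c)" for c :: real
      using finite_measure.integrable_const[OF prob_space.finite_measure[OF kprob]] .
    have gi: "g = (\<lambda>x. (c0 - l1 * x) + l2 * f \<bar>x\<bar>)"
      by (auto simp: g_def c0_def algebra_simps)
    have "(\<integral>x. g x \<partial>\<kappa>) = (\<integral>x. c0 - l1 * x \<partial>\<kappa>) + (\<integral>x. l2 * f \<bar>x\<bar> \<partial>\<kappa>)"
      unfolding gi
      by (rule Bochner_Integration.integral_add) (use kint fa_int kc in auto)
    also have "(\<integral>x. c0 - l1 * x \<partial>\<kappa>) = (\<integral>x. c0 \<partial>\<kappa>) - (\<integral>x. l1 * x \<partial>\<kappa>)"
      by (rule Bochner_Integration.integral_diff) (use kint kc in auto)
    also have "(\<integral>x. c0 \<partial>\<kappa>) = c0"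
      using prob_space.prob_space[OF kprob] by simp
    also have "(\<integral>x. l1 * x \<partial>\<kappa>) = l1 * mean \<kappa>"
      by (simp add: mean_def)
    also have "(\<integral>x. l2 * f \<bar>x\<bar> \<partial>\<kappa>) = l2 * (\<integral>x. f \<bar>x\<bar> \<partial>\<kappa>)"
      by simp
    also have "c0 - l1 * mean \<kappa> + l2 * (\<integral>x. f \<bar>x\<bar> \<partial>\<kappa>) = 1 - l2 * (B - (\<integral>x. f \<bar>x\<bar> \<partial>\<kappa>))"
      by (simp add: c0_def algebra_simps)
    also have "\<dots> \<le> 1" using fa_le l2_pos by (simp add: mult_nonneg_nonneg)
    finally show ?thesis .
  qed
  have Eg: "(\<integral>\<^sup>+\<omega>. ennreal (g (X i \<omega>)) \<partial>M) \<le> 1" if i: "i < n" for i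
  proof -
    have "(\<integral>\<^sup>+\<omega>. ennreal (g (X i \<omega>)) \<partial>M) = (\<integral>\<^sup>+x. ennreal (g x) \<partial>distr M borel (X i))"
      using X_meas[OF i] g_meas by (subst nn_integral_distr) auto
    also have "\<dots> = (\<integral>\<^sup>+x. ennreal (g x) \<partial>\<kappa>)" using X_distr[OF i] by simp
    also have "\<dots> = ennreal (\<integral>x. g x \<partial>\<kappa>)"
      using g_nonneg by (intro nn_integral_eq_integral g_int) auto
    also have "\<dots> \<le> 1" using g_integral by (simp add: ennreal_le_1)
    finally show ?thesis .
  qed
  define Y where "Y i \<omega> = ennreal (g (X i \<omega>))" for i \<omega>
  have Y_indep: "indep_vars (\<lambda>_. borel) Y {..<n}"
    unfolding Y_def
    by (rule indep_vars_compose2[OF X_indep, where Y="\<lambda>i x. ennreal (g x)"]) (use g_meas in auto)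
  have EP: "(\<integral>\<^sup>+\<omega>. (\<Prod>i<n. Y i \<omega>) \<partial>M) \<le> 1"
  proof -
    have "(\<integral>\<^sup>+\<omega>. (\<Prod>i<n. Y i \<omega>) \<partial>M) = (\<Prod>i<n. \<integral>\<^sup>+\<omega>. Y i \<omega> \<partial>M)"
      by (rule indep_vars_nn_integral[OF _ Y_indep]) auto
    also have "\<dots> \<le> (\<Prod>i<n. 1)"
      by (intro prod_mono_ennreal) (auto simp: Y_def Eg)
    finally show ?thesis by simp
  qed
  have Pmeas: "(\<lambda>\<omega>. (\<Prod>i<n. Y i \<omega>)) \<in> borel_measurable M"
    unfolding Y_def using X_meas g_meas by (intro borel_measurable_prod_ennreal) auto
  define c where "c = ennreal (exp (- real n * u))"
  define S where "S = {\<omega>\<in>space M. 1 \<le> c * (\<Prod>i<n. Y i \<omega>)}"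
  have "emeasure M S \<le> c * (\<integral>\<^sup>+ \<omega>. (\<Prod>i<n. Y i \<omega>) * indicator (space M) \<omega> \<partial>M)"
    unfolding S_def
    by (rule nn_integral_Markov_inequality) (use Pmeas in \<open>auto simp: borel_measurable_indicator_iff\<close>)
  also have "(\<integral>\<^sup>+ \<omega>. (\<Prod>i<n. Y i \<omega>) * indicator (space M) \<omega> \<partial>M) = (\<integral>\<^sup>+ \<omega>. (\<Prod>i<n. Y i \<omega>) \<partial>M)"
    by (intro nn_integral_cong) auto
  also have "c * \<dots> \<le> c * 1" using EP by (intro mult_left_mono) auto
  finally have eS: "emeasure M S \<le> c" by simp
  have sub: "{\<omega> \<in> space M. Lemp f B (l1, l2) (mean \<kappa>) n (\<lambda>i. X i \<omega>) \<ge> ereal u} \<subseteq> S"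
  proof (cases "n = 0")
    case True
    then show ?thesis by (auto simp: S_def c_def)
  next
    case False
    show ?thesis
    proof
      fix \<omega> assume "\<omega> \<in> {\<omega> \<in> space M. Lemp f B (l1, l2) (mean \<kappa>) n (\<lambda>i. X i \<omega>) \<ge> ereal u}"
      then have sp: "\<omega> \<in> space M" and L: "ereal u \<le> ereal (1 / real n) * (\<Sum>i<n. elog (g (X i \<omega>)))"
        by (auto simp: Lemp_def g_def)
      have pos: "\<forall>i<n. g (X i \<omega>) > 0"
      proof (rule ccontr)
        assume "\<not> ?thesis"
        with L have "ereal u \<le> ereal (1 / real n) * -\<infinity>" by (simp add: sum_elog)
        with False show False by simp
      qed
      with L have "u \<le> (1 / real n) * (\<Sum>i<n. ln (g (X i \<omega>)))" by (simp add: sum_elog)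
      then have "real n * u \<le> (\<Sum>i<n. ln (g (X i \<omega>)))" using False
        by (simp add: field_simps)
      then have "exp (real n * u) \<le> exp (\<Sum>i<n. ln (g (X i \<omega>)))" by simp
      also have "\<dots> = (\<Prod>i<n. g (X i \<omega>))" using pos by (simp add: exp_sum)
      finally have e: "exp (real n * u) \<le> (\<Prod>i<n. g (X i \<omega>))" .
      have "1 = exp (- real n * u) * exp (real n * u)" by (simp add: exp_minus field_simps)
      also have "\<dots> \<le> exp (- real n * u) * (\<Prod>i<n. g (X i \<omega>))" using e by (intro mult_left_mono) auto
      finally have "ennreal 1 \<le> ennreal (exp (- real n * u) * (\<Prod>i<n. g (X i \<omega>)))" by (rule ennreal_leI)
      also have "\<dots> = c * (\<Prod>i<n. Y i \<omega>)"
        using g_nonneg by (simp add: c_def Y_def ennreal_mult prod_ennreal prod_nonneg)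
      finally show "\<omega> \<in> S" using sp by (simp add: S_def)
    qed
  qed
  have "S \<in> sets M" unfolding S_def using Pmeas by measurable
  then have "emeasure M {\<omega> \<in> space M. Lemp f B (l1, l2) (mean \<kappa>) n (\<lambda>i. X i \<omega>) \<ge> ereal u} \<le> c"
    using sub eS by (meson emeasure_mono order_trans)
  then show ?thesis by (simp add: emeasure_eq_measure c_def ennreal_le_iff)
qed

end
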